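(* Let $A\in\mathbb{C}^{n\times n}$, $\lambda\in\mathbb{C}$ a simple eigenvalue of $A$, $v\in\mathbb{C}^n\setminus\{0\}$ with $Av=\lambda v$ and $u\in\mathbb{C}^n\setminus\{0\}$ with $A^*u=\bar\lambda u$. Then $\frac{\|u\|\,\|v\|}{|\langle u,v\rangle|}\le\sqrt{1+\mu(A,\lambda,v)^2}$.
   Context: For $v\ne0$, $T_v=v^\perp\subset\mathbb{C}^n$, $P_{v^\perp}$ the orthogonal projection onto $T_v$, $A_{\lambda,v}=P_{v^\perp}(A-\lambda\mathrm{Id})|_{T_v}:T_v\to T_v$, and $\mu(A,\lambda,v)=\|A\|_F\|A_{\lambda,v}^{-1}\|$ (Frobenius norm times operator norm). The quantity $\|u\|\|v\|/|\langle u,v\rangle|$ is the eigenvalue condition number $\mu_\lambda(A,\lambda,v)$. *)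

theory Defs
  imports "HOL-Analysis.Analysis" "HOL-Computational_Algebra.Polynomial"
begin

text \<open>Complex n-space is \<open>complex ^ 'n\<close>, n x n complex matrices are \<open>complex ^ 'n ^ 'n\<close>.
  The library norm on \<open>complex ^ 'n\<close> is the Euclidean (2-)norm.\<close>

definition cinner :: "complex ^ 'n \<Rightarrow> complex ^ 'n \<Rightarrow> complex" where
  "cinner u v = (\<Sum>i\<in>UNIV. cnj (u $ i) * v $ i)"

definition adjoint_mat :: "complex ^ 'n ^ 'n \<Rightarrow> complex ^ 'n ^ 'n" where
  "adjoint_mat A = (\<chi> i j. cnj (A $ j $ i))"

definition charpoly :: "complex ^ 'n ^ 'n \<Rightarrow> complex poly" where
  "charpoly A = det (\<chi> i j. (if i = j then [:0, 1:] else 0) - [:A $ i $ j:])"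

definition simple_eigenvalue :: "complex ^ 'n ^ 'n \<Rightarrow> complex \<Rightarrow> bool" where
  "simple_eigenvalue A lam \<longleftrightarrow> order lam (charpoly A) = 1"

definition frob_norm :: "complex ^ 'n ^ 'n \<Rightarrow> real" where
  "frob_norm A = sqrt (\<Sum>i\<in>UNIV. \<Sum>j\<in>UNIV. (cmod (A $ i $ j))\<^sup>2)"

definition orth_compl :: "complex ^ 'n \<Rightarrow> (complex ^ 'n) set" where
  "orth_compl v = {w. cinner v w = 0}"

definition proj_orth :: "complex ^ 'n \<Rightarrow> complex ^ 'n \<Rightarrow> complex ^ 'n" where
  "proj_orth v w = w - (cinner v w / cinner v v) *s v"

definition A_lam_v :: "complex ^ 'n ^ 'n \<Rightarrow> complex \<Rightarrow> complex ^ 'n \<Rightarrow> complex ^ 'n \<Rightarrow> complex ^ 'n" where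
  "A_lam_v A lam v w = proj_orth v ((A - mat lam) *v w)"

text \<open>The inverse of A_{\<lambda>,v} as a map T_v \<rightarrow> T_v (extended by 0 outside T_v
  to make it unique).\<close>
definition A_lam_v_inv :: "complex ^ 'n ^ 'n \<Rightarrow> complex \<Rightarrow> complex ^ 'n \<Rightarrow> complex ^ 'n \<Rightarrow> complex ^ 'n" where
  "A_lam_v_inv A lam v = (THE B.
      (\<forall>w\<in>orth_compl v. B w \<in> orth_compl v \<and> A_lam_v A lam v (B w) = w \<and> B (A_lam_v A lam v w) = w)
      \<and> (\<forall>w. w \<notin> orth_compl v \<longrightarrow> B w = 0))"

definition opnorm_on :: "(complex ^ 'n) set \<Rightarrow> (complex ^ 'n \<Rightarrow> complex ^ 'n) \<Rightarrow> real" where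
  "opnorm_on T B = Sup {norm (B w) | w. w \<in> T \<and> norm w \<le> 1}"

definition mu :: "complex ^ 'n ^ 'n \<Rightarrow> complex \<Rightarrow> complex ^ 'n \<Rightarrow> real" where
  "mu A lam v = frob_norm A * opnorm_on (orth_compl v) (A_lam_v_inv A lam v)"

end

theory Submission
  imports Defs
begin


lemma norm_sq_sum: "(norm (x::complex^'n))\<^sup>2 = (\<Sum>i\<in>UNIV. (cmod (x$i))\<^sup>2)"
  unfolding norm_vec_def L2_set_def by (simp add: sum_nonneg)

lemma cinner_self: "cinner x x = complex_of_real ((norm x)\<^sup>2)"
  unfolding norm_sq_sum cinner_def of_real_sum
  by (rule sum.cong) (auto simp: complex_norm_square mult.commute simp flip: of_real_power)

lemma cinner_add_right: "cinner x (y + z) = cinner x y + cinner x z"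
  by (simp add: cinner_def distrib_left sum.distrib)
lemma cinner_diff_right: "cinner x (y - z) = cinner x y - cinner x z"
  by (simp add: cinner_def right_diff_distrib sum_subtractf)
lemma cinner_scale_right: "cinner x (c *s y) = c * cinner x y"
  by (simp add: cinner_def sum_distrib_left algebra_simps)
lemma cinner_add_left: "cinner (x + y) z = cinner x z + cinner y z"
  by (simp add: cinner_def distrib_right sum.distrib)
lemma cinner_diff_left: "cinner (x - y) z = cinner x z - cinner y z"
  by (simp add: cinner_def left_diff_distrib sum_subtractf)
lemma cinner_scale_left: "cinner (c *s x) y = cnj c * cinner x y"
  by (simp add: cinner_def sum_distrib_left algebra_simps)
lemma cinner_commute: "cinner y x = cnj (cinner x y)"
  by (simp add: cinner_def mult.commute)
lemma cinner_zero_right[simp]: "cinner x 0 = 0" by (simp add: cinner_def)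
lemma cinner_zero_left[simp]: "cinner 0 x = 0" by (simp add: cinner_def)

lemma cinner_self_eq0: "cinner x x = 0 \<longleftrightarrow> x = 0"
  by (simp add: cinner_self)

lemma cinner_cs: "cmod (cinner x y) \<le> norm x * norm y"
proof -
  have "cmod (cinner x y) \<le> (\<Sum>i\<in>UNIV. cmod (cnj (x$i) * y$i))"
    unfolding cinner_def by (rule norm_sum)
  also have "\<dots> = (\<Sum>i\<in>UNIV. \<bar>cmod (x$i)\<bar> * \<bar>cmod (y$i)\<bar>)"
    by (simp add: norm_mult)
  also have "\<dots> \<le> L2_set (\<lambda>i. cmod (x$i)) UNIV * L2_set (\<lambda>i. cmod (y$i)) UNIV"
    by (rule L2_set_mult_ineq)
  finally show ?thesis by (simp add: norm_vec_def)
qed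

lemma frob_bound: "norm (M *v x) \<le> frob_norm M * norm (x::complex^'n)"
proof -
  have row: "(cmod ((M *v x)$i))\<^sup>2 \<le> (\<Sum>j\<in>UNIV. (cmod (M$i$j))\<^sup>2) * (norm x)\<^sup>2" for i
  proof -
    have "cmod ((M *v x)$i) = cmod (\<Sum>j\<in>UNIV. M$i$j * x$j)"
      unfolding matrix_vector_mult_def by simp
    also have "\<dots> \<le> (\<Sum>j\<in>UNIV. cmod (M$i$j * x$j))"
      by (rule norm_sum)
    also have "\<dots> = (\<Sum>j\<in>UNIV. \<bar>cmod (M$i$j)\<bar> * \<bar>cmod (x$j)\<bar>)" by (simp add: norm_mult)
    also have "\<dots> \<le> L2_set (\<lambda>j. cmod (M$i$j)) UNIV * L2_set (\<lambda>j. cmod (x$j)) UNIV"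
      by (rule L2_set_mult_ineq)
    also have "\<dots> = L2_set (\<lambda>j. cmod (M$i$j)) UNIV * norm x"
      by (simp add: norm_vec_def)
    finally have a: "cmod ((M *v x)$i) \<le> L2_set (\<lambda>j. cmod (M$i$j)) UNIV * norm x" .
    have "(cmod ((M *v x)$i))\<^sup>2 \<le> (L2_set (\<lambda>j. cmod (M$i$j)) UNIV * norm x)\<^sup>2"
      by (rule power_mono[OF a norm_ge_zero])
    also have "\<dots> = (\<Sum>j\<in>UNIV. (cmod (M$i$j))\<^sup>2) * (norm x)\<^sup>2"
      unfolding power_mult_distrib L2_set_def by (simp add: sum_nonneg)
    finally show ?thesis .
  qed
  have "(norm (M *v x))\<^sup>2 \<le> (\<Sum>i\<in>UNIV. (\<Sum>j\<in>UNIV. (cmod (M$i$j))\<^sup>2) * (norm x)\<^sup>2)"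
    by (subst norm_sq_sum) (intro sum_mono row)
  also have "\<dots> = (frob_norm M * norm x)\<^sup>2"
    unfolding frob_norm_def power_mult_distrib sum_distrib_right[symmetric] by (simp add: sum_nonneg)
  finally show ?thesis
    by (rule power2_le_imp_le) (simp add: frob_norm_def sum_nonneg)
qed
lemma adjoint_cinner: "cinner u (A *v z) = cinner (adjoint_mat A *v u) z"
proof -
  have "cinner u (A *v z) = (\<Sum>i\<in>UNIV. \<Sum>j\<in>UNIV. cnj (u$i) * (A$i$j * z$j))"
    unfolding cinner_def matrix_vector_mult_def by (simp add: sum_distrib_left)
  also have "\<dots> = (\<Sum>j\<in>UNIV. \<Sum>i\<in>UNIV. cnj (u$i) * (A$i$j * z$j))"
    by (rule sum.swap)
  also have "\<dots> = cinner (adjoint_mat A *v u) z"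
    unfolding cinner_def matrix_vector_mult_def adjoint_mat_def
    by (simp add: sum_distrib_left mult.commute mult.left_commute)
  finally show ?thesis .
qed

lemma mat_mult_vec: "mat c *v z = c *s z"
  by (simp add: vec_eq_iff matrix_vector_mult_def mat_def if_distrib if_distribR cong: if_cong)

lemma norm_smult: "norm (c *s (x::complex^'n)) = cmod c * norm x"
proof -
  have "(norm (c *s x))\<^sup>2 = (cmod c * norm x)\<^sup>2"
    unfolding norm_sq_sum power_mult_distrib by (simp add: norm_mult power_mult_distrib sum_distrib_left)
  then show ?thesis by (simp add: power2_eq_iff_nonneg)
qed

lemma pythag: "cinner x y = 0 \<Longrightarrow> (norm (x + y))\<^sup>2 = (norm x)\<^sup>2 + (norm (y::complex^'n))\<^sup>2"
proof -
  assume h: "cinner x y = 0"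
  then have h2: "cinner y x = 0" by (simp add: cinner_commute[of y x])
  have "complex_of_real ((norm (x+y))\<^sup>2) = cinner (x+y) (x+y)" by (simp add: cinner_self)
  also have "\<dots> = cinner x x + cinner y y" by (simp add: cinner_add_left cinner_add_right h h2)
  also have "\<dots> = complex_of_real ((norm x)\<^sup>2 + (norm y)\<^sup>2)" by (simp add: cinner_self)
  finally show ?thesis using of_real_eq_iff by blast
qed



definition cpm :: "complex^'n^'n \<Rightarrow> complex poly^'n^'n" where
  "cpm S = (\<chi> i j. [:S$i$j:])"
definition chm :: "complex^'n^'n \<Rightarrow> complex poly^'n^'n" where
  "chm M = (\<chi> i j. (if i = j then [:0,1:] else 0) - [:M$i$j:])"

lemma charpoly_chm: "charpoly M = det (chm M)"
  by (simp add: charpoly_def chm_def)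

lemma const_smult: "[:c:] = smult c 1" by simp
lemma const_sum: "[:sum (f::_\<Rightarrow>complex) A:] = (\<Sum>i\<in>A. [:f i:])"
proof -
  have "[:sum f A:] = smult (sum f A) 1" by simp
  also have "\<dots> = (\<Sum>i\<in>A. smult (f i) 1)" by (rule smult_sum)
  finally show ?thesis by simp
qed

lemma poly_det: "poly (det P) x = det (\<chi> i j. poly (P$i$j) x)"
  unfolding det_def by (simp add: poly_sum poly_prod)

lemma cpm_mult: "cpm (P ** Q) = cpm P ** cpm Q"
  by (simp add: cpm_def matrix_matrix_mult_def vec_eq_iff const_sum mult.commute)

definition XI :: "complex poly^'n^'n" where "XI = (\<chi> i j. if i = j then [:0,1:] else 0)"

lemma chm_XI: "chm M = XI - cpm M"
  by (simp add: chm_def XI_def cpm_def vec_eq_iff)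

lemma XI_comm: "XI ** cpm S = cpm S ** XI"
  by (simp add: XI_def cpm_def matrix_matrix_mult_def vec_eq_iff if_distrib if_distribR
     mult.commute cong: if_cong)

lemma matrix_sub_ldistrib': "(A::'a::ring_1^'n^'n) ** (B - C) = A ** B - A ** C"
  by (simp add: matrix_matrix_mult_def vec_eq_iff sum_subtractf right_diff_distrib)
lemma matrix_sub_rdistrib': "((B::'a::ring_1^'n^'n) - C) ** A = B ** A - C ** A"
  by (simp add: matrix_matrix_mult_def vec_eq_iff sum_subtractf left_diff_distrib)

lemma chm_sim: assumes "S ** M' = M ** S"
  shows "chm M ** cpm S = cpm S ** chm M'"
  unfolding chm_XI matrix_sub_ldistrib' matrix_sub_rdistrib' XI_comm
  by (simp add: cpm_mult[symmetric] assms)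

lemma poly_det_cpm: "poly (det (cpm S)) x = det S"
  by (simp add: poly_det cpm_def)

lemma poly_charpoly: "poly (charpoly A) x = det (mat x - A)"
  unfolding charpoly_chm poly_det
  by (rule arg_cong[where f=det]) (simp add: chm_def vec_eq_iff mat_def)

lemma charpoly_sim: assumes "S ** M' = M ** S" "det S \<noteq> 0"
  shows "charpoly M = charpoly M'"
proof -
  have "det (cpm S) \<noteq> 0" using assms(2) poly_det_cpm by (metis poly_0)
  moreover have "charpoly M * det (cpm S) = det (cpm S) * charpoly M'"
    unfolding charpoly_chm det_mul[symmetric] chm_sim[OF assms(1)] ..
  ultimately show ?thesis by (simp add: mult.commute)
qed




lemma mv_smult: "(M::'a::comm_ring_1^'n^'m) *v (c *s x) = c *s (M *v x)"
  by (simp add: vec_eq_iff matrix_vector_mult_def sum_distrib_left algebra_simps)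

lemma col_entry: "(M::'a::comm_ring_1^'n^'m) $ k $ j = (M *v axis j 1) $ k"
  by (simp add: matrix_vector_mult_def axis_def if_distrib if_distribR cong: if_cong)

lemma inv_of_inj0:
  fixes M :: "complex^'n^'n"
  assumes "\<And>y. M *v y = 0 \<Longrightarrow> y = 0"
  shows "det M \<noteq> 0"
proof -
  have "inj ((*v) M)"
  proof (rule injI)
    fix a b assume "M *v a = M *v b"
    then have "M *v (a - b) = 0" by (simp add: matrix_vector_mult_diff_distrib)
    from assms[OF this] show "a = b" by simp
  qed
  then have "surj ((*v) M)" using vec.linear_inj_imp_surj[OF matrix_vector_mul_linear_gen] by blast
  with \<open>inj _\<close> have "bij ((*v) M)" by (simp add: bij_def)
  then show ?thesis using invertible_eq_bij invertible_det_nz by blast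
qed

lemma charpoly_nz: "charpoly (A::complex^'n^'n) \<noteq> 0"
proof
  assume h: "charpoly A = 0"
  define x where "x = complex_of_real (frob_norm A + 1)"
  have F0: "frob_norm A \<ge> 0" by (simp add: frob_norm_def sum_nonneg)
  have "det (mat x - A) \<noteq> 0"
  proof (rule inv_of_inj0)
    fix y assume "(mat x - A) *v y = 0"
    then have "x *s y = A *v y" by (simp add: matrix_vector_mult_diff_rdistrib mat_mult_vec)
    then have "cmod x * norm y \<le> frob_norm A * norm y"
      by (metis frob_bound norm_smult)
    moreover have "cmod x = frob_norm A + 1" using F0 by (simp add: x_def)
    ultimately have "norm y \<le> 0" by (simp add: algebra_simps)
    then show "y = 0" by simp
  qed
  moreover have "poly (charpoly A) x = det (mat x - A)" by (rule poly_charpoly)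
  ultimately show False using h by simp
qed

lemma row_eq: "row k R = R $ k" by (simp add: row_def vec_eq_iff)

lemma two_rows_dvd:
  fixes R :: "'a::comm_ring_1^'n^'n"
  assumes ij: "i1 \<noteq> i2" and r1: "row i1 R = q *s axis i1 1"
    and r2: "row i2 R = q *s axis i2 1 + r *s axis i1 1"
  shows "q * q dvd det R"
proof -
  define R1 where "R1 = (\<chi> k. if k = i1 then axis i1 1 else row k R)"
  have Req: "R = (\<chi> k. if k = i1 then q *s axis i1 1 else row k R)"
    unfolding vec_eq_iff[of R]
  proof
    fix k show "R $ k = (\<chi> k. if k = i1 then q *s axis i1 1 else row k R) $ k"
      using r1 by (cases "k = i1") (simp_all add: row_eq)
  qed
  have d1: "det R = q * det R1"
  proof -
    have "det R = det (\<chi> k. if k = i1 then q *s axis i1 1 else row k R)"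
      using Req by (rule arg_cong)
    also have "\<dots> = q * det R1" unfolding R1_def by (rule det_row_mul)
    finally show ?thesis .
  qed
  define R2 where "R2 = (\<chi> k. if k = i2 then row i2 R1 + (-r) *s row i1 R1 else row k R1)"
  have d2: "det R2 = det R1" unfolding R2_def by (rule det_row_operation) (use ij in auto)
  have e1: "row i2 R1 = row i2 R" using ij by (simp add: R1_def row_def)
  have e2: "row i1 R1 = axis i1 1" by (simp add: R1_def row_def)
  have "R2 = (\<chi> k. if k = i2 then q *s axis i2 1 else row k R1)"
  proof -
    have z: "q *s axis i2 1 + r *s axis i1 1 + (-r) *s axis i1 1 = q *s axis i2 1"
      by (simp add: vec_eq_iff)
    show ?thesis unfolding R2_def e1 e2 r2 z ..
  qed
  also have "det \<dots> = q * det (\<chi> k. if k = i2 then axis i2 1 else row k R1)"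
    by (rule det_row_mul)
  finally show ?thesis using d1 d2 by (metis dvd_triv_left mult.assoc)
qed



lemma basis_matrix:
  fixes v z :: "complex^'n"
  assumes v0: "v \<noteq> 0" and z0: "z \<noteq> 0" and o: "cinner v z = 0"
  obtains S i1 i2 where "det S \<noteq> 0" "i1 \<noteq> i2" "S *v axis i1 1 = v" "S *v axis i2 1 = z"
proof -
  have vv: "cinner v v \<noteq> 0" using v0 cinner_self_eq0 by blast
  have vz: "v \<noteq> z" using vv o by auto
  have nsp: "v \<notin> vec.span {z}"
  proof
    assume "v \<in> vec.span {z}"
    then obtain k where "v = k *s z" by (auto simp: vec.span_singleton)
    then have "cinner v v = k * cinner v z" by (metis cinner_scale_right)
    then show False using vv o by simp
  qed
  have ind: "vec.independent {v, z}"
    using nsp vz z0 by (simp add: vec.independent_insert vec.span_empty vec.independent_empty)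
  obtain B where B: "{v, z} \<subseteq> B" "B \<subseteq> UNIV" "vec.independent B" "UNIV \<subseteq> vec.span B"
    by (rule vec.maximal_independent_subset_extend[OF subset_UNIV ind])
  have fB: "finite B" using B(3) by (rule vec.finiteI_independent)
  have cB: "card B = CARD('n)"
    using vec.basis_card_eq_dim[OF subset_UNIV B(4) B(3)] vec.dim_UNIV card_cart_basis by metis
  obtain g where g: "bij_betw g (UNIV::'n set) B"
    using finite_same_card_bij[OF finite fB] cB by metis
  define i1 where "i1 = inv_into UNIV g v"
  define i2 where "i2 = inv_into UNIV g z"
  have gr: "g ` UNIV = B" using g by (simp add: bij_betw_def)
  have g1: "g i1 = v" unfolding i1_def using B(1) gr by (metis f_inv_into_f insert_subset)
  have g2: "g i2 = z" unfolding i2_def using B(1) gr by (metis f_inv_into_f insert_subset)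
  have i12: "i1 \<noteq> i2" using g1 g2 vz by auto
  define S where "S = (\<chi> i j. g j $ i)"
  have Sv: "S *v x = (\<Sum>j\<in>UNIV. x$j *s g j)" for x
    by (simp add: S_def vec_eq_iff matrix_vector_mult_def sum_component mult.commute)
  have Sax: "S *v axis j 1 = g j" for j
    by (simp add: vec_eq_iff col_entry[symmetric] S_def)
  have "surj ((*v) S)"
    unfolding surj_def
  proof
    fix y :: "complex^'n"
    have "y \<in> vec.span B" using B(4) by auto
    then obtain u where "y = (\<Sum>b\<in>B. u b *s b)" using vec.span_finite[OF fB] by auto
    also have "\<dots> = (\<Sum>j\<in>UNIV. u (g j) *s g j)"
      using sum.reindex_bij_betw[OF g, of "\<lambda>b. u b *s b"] by simp
    also have "\<dots> = S *v (\<chi> j. u (g j))" by (simp add: Sv)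
    finally show "\<exists>x. y = S *v x" by metis
  qed
  then have "inj ((*v) S)" by (rule vec.linear_surj_imp_inj[OF matrix_vector_mul_linear_gen])
  with \<open>surj _\<close> have "bij ((*v) S)" by (simp add: bij_def)
  then have "det S \<noteq> 0" using invertible_eq_bij invertible_det_nz by blast
  then show ?thesis using that i12 Sax g1 g2 by metis
qed




lemma jordan_dvd:
  fixes A :: "complex^'n^'n"
  assumes v0: "v \<noteq> 0" and z0: "z \<noteq> 0" and o: "cinner v z = 0"
    and Av: "A *v v = lam *s v" and Az: "A *v z = lam *s z + c *s v"
  shows "[:-lam, 1:]^2 dvd charpoly A"
proof -
  obtain S i1 i2 where S: "det S \<noteq> 0" "i1 \<noteq> i2" "S *v axis i1 1 = v" "S *v axis i2 1 = z"
    using basis_matrix[OF v0 z0 o] by blast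
  have "invertible S" using S(1) invertible_det_nz by blast
  then obtain S' where S': "S ** S' = mat 1" "S' ** S = mat 1" unfolding invertible_def by blast
  define M where "M = S' ** (A ** S)"
  have sim: "S ** M = A ** S" unfolding M_def
    by (simp add: matrix_mul_assoc S'(1))
  have cp: "charpoly A = charpoly M" by (rule charpoly_sim[OF sim S(1)])
  have S'1: "S' *v v = axis i1 1"
    using S(3) S'(2) by (metis matrix_vector_mul_assoc matrix_vector_mul_lid)
  have S'2: "S' *v z = axis i2 1"
    using S(4) S'(2) by (metis matrix_vector_mul_assoc matrix_vector_mul_lid)
  have Mv: "M *v x = S' *v (A *v (S *v x))" for x
    unfolding M_def by (simp add: matrix_vector_mul_assoc)
  have c1: "M *v axis i1 1 = lam *s axis i1 1"
    unfolding Mv S(3) Av mv_smult S'1 ..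
  have c2: "M *v axis i2 1 = lam *s axis i2 1 + c *s axis i1 1"
    unfolding Mv S(4) Az matrix_vector_right_distrib mv_smult S'1 S'2 ..
  define q where "q = [:-lam, 1:]"
  define R where "R = transpose (chm M)"
  have Rent: "R $ i $ k = (if k = i then [:0,1:] else 0) - [:(M *v axis i 1) $ k:]" for i k
    by (simp add: R_def transpose_def chm_def col_entry[symmetric])
  have r1: "row i1 R = q *s axis i1 1"
    by (simp add: vec_eq_iff row_def Rent c1) (simp add: q_def axis_def)
  have r2: "row i2 R = q *s axis i2 1 + (-[:c:]) *s axis i1 1"
    using S(2) by (simp add: vec_eq_iff row_def Rent c2) (simp add: q_def axis_def)
  have "q * q dvd det R" by (rule two_rows_dvd[OF S(2) r1 r2])
  moreover have "det R = charpoly M" by (simp add: R_def charpoly_chm)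
  ultimately show ?thesis
    using cp by (simp add: q_def power2_eq_square)
qed




lemma proj_add: "proj_orth v (x + y) = proj_orth v x + proj_orth v y"
  by (simp add: proj_orth_def cinner_add_right vec_eq_iff add_divide_distrib algebra_simps)
lemma proj_scale: "proj_orth v (c *s x) = c *s proj_orth v x"
  by (simp add: proj_orth_def cinner_scale_right vec_eq_iff algebra_simps)
lemma proj_orth: "cinner v v \<noteq> 0 \<Longrightarrow> cinner v (proj_orth v w) = 0"
  by (simp add: proj_orth_def cinner_diff_right cinner_scale_right)

lemma Lv_add: "A_lam_v A lam v (x + y) = A_lam_v A lam v x + A_lam_v A lam v y"
  by (simp add: A_lam_v_def matrix_vector_right_distrib proj_add)
lemma Lv_scale: "A_lam_v A lam v (c *s x) = c *s A_lam_v A lam v x"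
  by (simp add: A_lam_v_def mv_smult proj_scale)
lemma Lv_diff: "A_lam_v A lam v (x - y) = A_lam_v A lam v x - A_lam_v A lam v y"
  using Lv_add[of A lam v "x - y" y] by (simp add: algebra_simps)

lemma Lp_linear: "Vector_Spaces.linear (*s) (*s) (\<lambda>w. A_lam_v A lam v w + cinner v w *s v)"
  unfolding Vector_Spaces.linear_iff
  by (simp add: vec.vector_space_axioms Lv_add Lv_scale cinner_add_right cinner_scale_right
      vec_eq_iff algebra_simps)




theorem lemma3p3:
  fixes A :: "complex ^ 'n ^ 'n" and lam :: complex and u v :: "complex ^ 'n"
  assumes "simple_eigenvalue A lam"
    and "v \<noteq> 0" and "A *v v = lam *s v"
    and "u \<noteq> 0" and "adjoint_mat A *v u = cnj lam *s u"
  shows "norm u * norm v / cmod (cinner u v) \<le> sqrt (1 + (mu A lam v)\<^sup>2)"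
proof -
  define T where "T = orth_compl v"
  define L where "L = A_lam_v A lam v"
  have vv: "cinner v v \<noteq> 0" using assms(2) cinner_self_eq0 by blast
  have LT: "L w \<in> T" for w
    unfolding L_def T_def orth_compl_def A_lam_v_def using proj_orth[OF vv] by simp
  have Lsub: "L (x - y) = L x - L y" for x y unfolding L_def by (rule Lv_diff)
  have L0: "L 0 = 0" using Lsub[of 0 0] by simp
  have Tsub: "x - y \<in> T" if "x \<in> T" "y \<in> T" for x y
    using that by (simp add: T_def orth_compl_def cinner_diff_right)
  have inj: "z = 0" if z: "z \<in> T" "L z = 0" for z
  proof (rule ccontr)
    assume z0: "z \<noteq> 0"
    define c where "c = cinner v ((A - mat lam) *v z) / cinner v v"
    have "proj_orth v ((A - mat lam) *v z) = 0" using z(2) by (simp add: L_def A_lam_v_def)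
    then have "(A - mat lam) *v z = c *s v" by (simp add: proj_orth_def c_def)
    then have Az: "A *v z = lam *s z + c *s v"
      by (simp add: matrix_vector_mult_diff_rdistrib mat_mult_vec algebra_simps)
    have o: "cinner v z = 0" using z(1) by (simp add: T_def orth_compl_def)
    have "[:-lam, 1:]^2 dvd charpoly A" by (rule jordan_dvd[OF assms(2) z0 o assms(3) Az])
    then have "2 \<le> order lam (charpoly A)" using charpoly_nz[of A] by (simp add: order_divides)
    then show False using assms(1) by (simp add: simple_eigenvalue_def)
  qed
  have injT: "x = y" if "x \<in> T" "y \<in> T" "L x = L y" for x y
    using inj[OF Tsub[OF that(1,2)]] that(3) Lsub by simp
  define L' where "L' w = L w + cinner v w *s v" for w
  have linL': "Vector_Spaces.linear (*s) (*s) L'"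
    unfolding L'_def[abs_def] L_def by (rule Lp_linear)
  have vL: "cinner v (L w) = 0" for w using LT[of w] by (simp add: T_def orth_compl_def)
  have cvL': "cinner v (L' w) = cinner v w * cinner v v" for w
    by (simp add: L'_def cinner_add_right cinner_scale_right vL)
  have L'sub: "L' (x - y) = L' x - L' y" for x y
    by (simp add: L'_def Lsub cinner_diff_right vec_eq_iff algebra_simps)
  have L'0: "w = 0" if "L' w = 0" for w
  proof -
    have "cinner v w * cinner v v = 0" using cvL'[of w] that by simp
    then have "cinner v w = 0" using vv by simp
    then have wT: "w \<in> T" and "L w = 0" using that by (simp_all add: T_def orth_compl_def L'_def)
    then show ?thesis using inj by blast
  qed
  have injL': "inj L'"
  proof (rule injI)
    fix x y assume h: "L' x = L' y"
    then have "L' (x - y) = 0" by (simp add: L'sub)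
    then show "x = y" using L'0 by fastforce
  qed
  have "surj L'" by (rule vec.linear_inj_imp_surj[OF linL' injL'])
  then obtain g where g: "Vector_Spaces.linear (*s) (*s) g" "L' \<circ> g = id"
    using vec.linear_surjective_right_inverse[OF linL'] by blast
  have gT: "g w \<in> T \<and> L (g w) = w" if "w \<in> T" for w
  proof -
    have e: "L' (g w) = w" using g(2) by (simp add: fun_eq_iff)
    have "cinner v w = 0" using that by (simp add: T_def orth_compl_def)
    then have "cinner v (g w) * cinner v v = 0" using cvL'[of "g w"] e by simp
    then have "cinner v (g w) = 0" using vv by simp
    then show ?thesis using e by (simp add: T_def orth_compl_def L'_def)
  qed
  define Binv where "Binv w = (if w \<in> T then g w else 0)" for w
  have P: "(\<forall>w\<in>T. Binv w \<in> T \<and> L (Binv w) = w \<and> Binv (L w) = w) \<and> (\<forall>w. w \<notin> T \<longrightarrow> Binv w = 0)"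
  proof (intro conjI ballI allI impI)
    fix w assume w: "w \<in> T"
    show "Binv w \<in> T" "L (Binv w) = w" using gT[OF w] w by (simp_all add: Binv_def)
    have "g (L w) \<in> T" "L (g (L w)) = L w" using gT[OF LT[of w]] by auto
    then have "g (L w) = w" using injT w by blast
    then show "Binv (L w) = w" using LT[of w] by (simp add: Binv_def)
  next
    fix w assume "w \<notin> T" then show "Binv w = 0" by (simp add: Binv_def)
  qed
  have inv_eq: "A_lam_v_inv A lam v = Binv"
    unfolding A_lam_v_inv_def T_def[symmetric] L_def[symmetric]
  proof (rule the_equality)
    show "(\<forall>w\<in>T. Binv w \<in> T \<and> L (Binv w) = w \<and> Binv (L w) = w) \<and> (\<forall>w. w \<notin> T \<longrightarrow> Binv w = 0)"
      by (rule P)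
  next
    fix B assume PB: "(\<forall>w\<in>T. B w \<in> T \<and> L (B w) = w \<and> B (L w) = w) \<and> (\<forall>w. w \<notin> T \<longrightarrow> B w = 0)"
    show "B = Binv"
    proof
      fix w show "B w = Binv w"
      proof (cases "w \<in> T")
        case True then show ?thesis using PB P injT by metis
      next
        case False then show ?thesis using PB P by metis
      qed
    qed
  qed
  define N where "N = opnorm_on T Binv"
  define SS where "SS = {norm (Binv w) | w. w \<in> T \<and> norm w \<le> 1}"
  have N_SS: "N = Sup SS" by (simp add: N_def SS_def opnorm_on_def)
  have BinvT: "Binv w = g w" if "w \<in> T" for w using that by (simp add: Binv_def)
  have bdd: "bdd_above SS"
  proof (rule bdd_aboveI)
    fix x assume "x \<in> SS"
    then obtain w where w: "x = norm (Binv w)" "w \<in> T" "norm w \<le> 1" by (auto simp: SS_def)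
    have "norm (Binv w) = norm (matrix g *v w)" using w(2) by (simp add: BinvT matrix_works[OF g(1)])
    also have "\<dots> \<le> frob_norm (matrix g) * norm w" by (rule frob_bound)
    also have "\<dots> \<le> frob_norm (matrix g) * 1"
      by (rule mult_left_mono[OF w(3)]) (simp add: frob_norm_def sum_nonneg)
    finally show "x \<le> frob_norm (matrix g)" using w(1) by simp
  qed
  have T0: "0 \<in> T" by (simp add: T_def orth_compl_def)
  have B0: "Binv 0 = 0" using P T0 L0 by metis
  have N0: "N \<ge> 0"
  proof -
    have "norm (Binv 0) \<in> SS" using T0 unfolding SS_def by force
    then have "norm (Binv 0) \<le> N" unfolding N_SS by (rule cSup_upper[OF _ bdd])
    then show ?thesis using B0 by simp
  qed
  have Nb: "norm (Binv w) \<le> N * norm w" if w: "w \<in> T" for w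
  proof (cases "w = 0")
    case True then show ?thesis using B0 by simp
  next
    case False
    define t where "t = 1 / norm w"
    have t0: "t > 0" using False by (simp add: t_def)
    define w' where "w' = complex_of_real t *s w"
    have w'T: "w' \<in> T" using w by (simp add: w'_def T_def orth_compl_def cinner_scale_right)
    have nw': "norm w' = 1" using False t0 by (simp add: w'_def norm_smult) (simp add: t_def)
    have "complex_of_real t *s Binv w \<in> T" using P w
      by (simp add: T_def orth_compl_def cinner_scale_right)
    moreover have "L (complex_of_real t *s Binv w) = w'"
      using P w by (simp add: L_def Lv_scale w'_def)
    ultimately have "Binv w' = complex_of_real t *s Binv w" using injT P w'T by metis
    then have "norm (Binv w') = t * norm (Binv w)" using t0 by (simp add: norm_smult)
    moreover have "norm (Binv w') \<le> N"
    proof -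
      have "norm (Binv w') \<in> SS" using w'T nw' unfolding SS_def by force
      then show ?thesis unfolding N_SS by (rule cSup_upper[OF _ bdd])
    qed
    ultimately have "norm (Binv w) / norm w \<le> N" by (simp add: t_def)
    then show ?thesis using False by (simp add: divide_le_eq mult.commute)
  qed
  have mu_eq: "mu A lam v = frob_norm A * N" by (simp add: mu_def N_def T_def inv_eq)
  have F0: "frob_norm A \<ge> 0" by (simp add: frob_norm_def sum_nonneg)
  show ?thesis
  proof (cases "cinner u v = 0")
    case True then show ?thesis by simp
  next
    case False
    define a where "a = cinner v u / cinner v v"
    define w where "w = u - a *s v"
    have cvw: "cinner v w = 0" using vv by (simp add: w_def a_def cinner_diff_right cinner_scale_right)
    have wT: "w \<in> T" using cvw by (simp add: T_def orth_compl_def)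
    have cwv: "cinner w v = 0" using cvw by (simp add: cinner_commute[of w v])
    have uvw: "u = a *s v + w" by (simp add: w_def)
    have key: "cinner u ((A - mat lam) *v z) = 0" for z
    proof -
      have "cinner u ((A - mat lam) *v z) = cinner u (A *v z) - lam * cinner u z"
        by (simp add: matrix_vector_mult_diff_rdistrib mat_mult_vec cinner_diff_right cinner_scale_right)
      also have "cinner u (A *v z) = lam * cinner u z"
        unfolding adjoint_cinner assms(5) cinner_scale_left by simp
      finally show ?thesis by simp
    qed
    define z where "z = Binv w"
    have zT: "z \<in> T" and Lz: "L z = w" using P wT by (auto simp: z_def)
    have cvz: "cinner v z = 0" using zT by (simp add: T_def orth_compl_def)
    define X where "X = (A - mat lam) *v z"
    define b where "b = cinner v X / cinner v v"
    have we: "w = X - b *s v" using Lz by (simp add: L_def A_lam_v_def proj_orth_def X_def b_def)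
    have "cinner w w = cinner w (X - b *s v)" by (subst (2) we) (rule refl)
    also have "\<dots> = cinner w ((A - mat lam) *v z)"
      by (simp add: cinner_diff_right cinner_scale_right cwv X_def)
    also have "\<dots> = - cnj a * cinner v ((A - mat lam) *v z)"
      by (simp add: w_def cinner_diff_left cinner_scale_left key)
    also have "cinner v ((A - mat lam) *v z) = cinner v (A *v z)"
      by (simp add: matrix_vector_mult_diff_rdistrib mat_mult_vec cinner_diff_right cinner_scale_right cvz)
    finally have ww: "cinner w w = - cnj a * cinner v (A *v z)" .
    have "(norm w)\<^sup>2 = cmod (cinner w w)" by (simp add: cinner_self del: of_real_power)
    also have "\<dots> = cmod a * cmod (cinner v (A *v z))" by (simp add: ww norm_mult)
    also have "\<dots> \<le> cmod a * (norm v * norm (A *v z))"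
      by (rule mult_left_mono[OF cinner_cs]) simp
    also have "\<dots> \<le> cmod a * (norm v * (frob_norm A * norm z))"
      by (intro mult_left_mono frob_bound) simp_all
    also have "\<dots> \<le> cmod a * (norm v * (frob_norm A * (N * norm w)))"
      using Nb[OF wT] F0 by (intro mult_left_mono) (simp_all add: z_def)
    finally have wsq: "(norm w)\<^sup>2 \<le> (cmod a * norm v * mu A lam v) * norm w"
      by (simp add: mu_eq algebra_simps)
    have wb: "norm w \<le> cmod a * norm v * mu A lam v"
    proof (cases "norm w = 0")
      case True then show ?thesis using N0 F0 by (simp add: mu_eq)
    next
      case False
      then have "norm w > 0" by simp
      then show ?thesis using wsq by (simp add: power2_eq_square)
    qed
    have a0: "a \<noteq> 0" using False by (simp add: uvw cinner_add_left cinner_scale_left cwv)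
    have cuv: "cmod (cinner u v) = cmod a * (norm v)\<^sup>2"
      by (simp add: uvw cinner_add_left cinner_scale_left cwv cinner_self norm_mult del: of_real_power)
    have nu: "(norm u)\<^sup>2 = (cmod a * norm v)\<^sup>2 + (norm w)\<^sup>2"
      unfolding uvw by (subst pythag) (simp_all add: cinner_scale_left cvw norm_smult)
    define D where "D = cmod a * norm v"
    have D0: "D > 0" using a0 assms(2) by (simp add: D_def)
    have lhs: "norm u * norm v / cmod (cinner u v) = norm u / D"
      using D0 assms(2) by (simp add: cuv D_def power2_eq_square)
    have "(norm u / D)\<^sup>2 = 1 + (norm w / D)\<^sup>2"
    proof -
      have nu': "(norm u)\<^sup>2 = D\<^sup>2 + (norm w)\<^sup>2" using nu by (simp add: D_def)
      show ?thesis using D0 by (simp add: power_divide nu' add_divide_distrib)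
    qed
    also have "\<dots> \<le> 1 + (mu A lam v)\<^sup>2"
    proof -
      have "norm w / D \<le> mu A lam v" using wb D0 by (simp add: D_def divide_le_eq mult.commute)
      then have "(norm w / D)\<^sup>2 \<le> (mu A lam v)\<^sup>2" using D0 by (intro power_mono) simp_all
      then show ?thesis by simp
    qed
    finally show ?thesis unfolding lhs by (rule real_le_rsqrt)
  qed
qed

end
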